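(* Let $f=a_0+ a_{1}z+\cdots+a_m z^m\in \mathbb{Z}[z]$ be primitive (the greatest common divisor of its coefficients is $1$). Suppose there exist positive real numbers $\alpha<\beta$ and an index $j\in \{0,1,\ldots,m\}$ such that \[ |a_j|\alpha^j >\left(\frac{\beta}{\alpha}\right)^{m-j}\sum_{i=0,\, i\neq j}^{m} |a_i|\alpha^i. \] If there exist natural numbers $n$ and $d$ with $\beta-d\geq n\geq \alpha+d$ such that either $|f(n)|/d$ is a prime, or $|f(n)|/d$ is a prime power coprime to $|f'(n)|$, then $f$ is irreducible in $\mathbb{Z}[z]$.
   Context: $f'$ denotes the derivative of $f$. Natural numbers are positive integers. *)

theory Defs
  imports "HOL-Computational_Algebra.Computational_Algebra"
begin

end

theory Submission
  imports Defs
begin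

lemma map_poly_of_int_mult:
  "map_poly (of_int :: int \<Rightarrow> 'a::comm_ring_1) (p * q) = map_poly of_int p * map_poly of_int q"
  by (rule poly_eqI) (simp add: coeff_map_poly coeff_mult)

lemma poly_map_of_int:
  "poly (map_poly (of_int :: int \<Rightarrow> complex) p) (of_int x) = of_int (poly p x)"
  by (induct p) (simp_all add: map_poly_pCons)

lemma roots_outside:
  fixes f :: "int poly" and \<alpha> \<beta> :: real and j :: nat and z :: complex
  assumes pos: "0 < \<alpha>" "\<alpha> < \<beta>"
    and j: "j \<le> degree f"
    and dom: "\<bar>real_of_int (coeff f j)\<bar> * \<alpha> ^ j >
              (\<beta> / \<alpha>) ^ (degree f - j) *
              (\<Sum>i\<in>{0..degree f} - {j}. \<bar>real_of_int (coeff f i)\<bar> * \<alpha> ^ i)"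
    and root: "poly (map_poly of_int f) z = 0"
  shows "cmod z < \<alpha> \<or> cmod z > \<beta>"
proof (rule ccontr)
  assume "\<not> (cmod z < \<alpha> \<or> cmod z > \<beta>)"
  hence r1: "\<alpha> \<le> cmod z" and r2: "cmod z \<le> \<beta>" by auto
  define m where "m = degree f"
  define r where "r = cmod z"
  define t where "t = r / \<alpha>"
  define A where "A = {0..m} - {j}"
  have t1: "1 \<le> t" using r1 pos by (simp add: t_def r_def)
  have t2: "t \<le> \<beta> / \<alpha>" using r2 pos by (simp add: t_def r_def divide_right_mono)
  have rt: "r = \<alpha> * t" using pos by (simp add: t_def)
  have deg: "degree (map_poly (of_int :: int \<Rightarrow> complex) f) = m"
    by (simp add: m_def degree_map_poly)
  have "poly (map_poly of_int f) z = (\<Sum>i\<in>{0..m}. of_int (coeff f i) * z ^ i)"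
    by (simp add: poly_altdef deg coeff_map_poly atLeast0AtMost)
  also have "\<dots> = of_int (coeff f j) * z ^ j + (\<Sum>i\<in>A. of_int (coeff f i) * z ^ i)"
    unfolding A_def using j by (subst sum.remove[of _ j]) (auto simp: m_def)
  finally have eq: "poly (map_poly of_int f) z = of_int (coeff f j) * z ^ j + (\<Sum>i\<in>A. of_int (coeff f i) * z ^ i)" .
  have "cmod (\<Sum>i\<in>A. of_int (coeff f i) * z ^ i) \<le> (\<Sum>i\<in>A. cmod (of_int (coeff f i) * z ^ i))"
    by (rule norm_sum)
  also have "\<dots> = (\<Sum>i\<in>A. \<bar>real_of_int (coeff f i)\<bar> * r ^ i)"
    by (simp add: norm_mult norm_power r_def)
  also have "\<dots> \<le> (\<Sum>i\<in>A. \<bar>real_of_int (coeff f i)\<bar> * \<alpha> ^ i * (t ^ j * (\<beta> / \<alpha>) ^ (m - j)))"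
  proof (rule sum_mono)
    fix i assume i: "i \<in> A"
    hence im: "i \<le> m" by (auto simp: A_def)
    have "t ^ i \<le> t ^ m" using t1 im by (simp add: power_increasing)
    also have "t ^ m = t ^ j * t ^ (m - j)" using j by (simp add: m_def flip: power_add)
    also have "\<dots> \<le> t ^ j * (\<beta> / \<alpha>) ^ (m - j)"
      using t1 t2 by (intro mult_left_mono power_mono) auto
    finally have "t ^ i \<le> t ^ j * (\<beta> / \<alpha>) ^ (m - j)" .
    hence "\<bar>real_of_int (coeff f i)\<bar> * \<alpha> ^ i * t ^ i \<le> \<bar>real_of_int (coeff f i)\<bar> * \<alpha> ^ i * (t ^ j * (\<beta> / \<alpha>) ^ (m - j))"
      using pos by (intro mult_left_mono) auto
    thus "\<bar>real_of_int (coeff f i)\<bar> * r ^ i \<le> \<bar>real_of_int (coeff f i)\<bar> * \<alpha> ^ i * (t ^ j * (\<beta> / \<alpha>) ^ (m - j))"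
      by (simp add: rt power_mult_distrib mult.assoc)
  qed
  also have "\<dots> = t ^ j * ((\<beta> / \<alpha>) ^ (m - j) * (\<Sum>i\<in>A. \<bar>real_of_int (coeff f i)\<bar> * \<alpha> ^ i))"
    by (simp add: sum_distrib_left sum_distrib_right mult_ac)
  also have "\<dots> < t ^ j * (\<bar>real_of_int (coeff f j)\<bar> * \<alpha> ^ j)"
    using dom t1 by (intro mult_strict_left_mono) (auto simp: A_def m_def)
  also have "\<dots> = cmod (of_int (coeff f j) * z ^ j)"
    by (simp add: norm_mult norm_power rt power_mult_distrib r_def[symmetric] mult_ac)
  finally have lt: "cmod (\<Sum>i\<in>A. of_int (coeff f i) * z ^ i) < cmod (of_int (coeff f j) * z ^ j)" .
  have "cmod (of_int (coeff f j) * z ^ j) - cmod (\<Sum>i\<in>A. of_int (coeff f i) * z ^ i)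
        \<le> cmod (poly (map_poly of_int f) z)"
    unfolding eq by (metis norm_diff_ineq)
  with lt root show False by simp
qed

lemma factor_big:
  fixes g :: "int poly" and x :: complex and d :: real
  assumes deg: "degree g \<ge> 1" and d: "d \<ge> 1"
    and roots: "\<And>z. poly (map_poly of_int g) z = 0 \<Longrightarrow> cmod (x - z) > d"
  shows "cmod (poly (map_poly of_int g) x) > d"
proof -
  define gc where "gc = (map_poly of_int g :: complex poly)"
  have dg: "degree gc = degree g" by (simp add: gc_def degree_map_poly)
  have lc: "lead_coeff gc = of_int (lead_coeff g)"
    by (simp add: gc_def coeff_map_poly degree_map_poly)
  have g0: "g \<noteq> 0" using deg by auto
  hence lg: "\<bar>lead_coeff g\<bar> \<ge> 1" by (simp add: int_one_le_iff_zero_less)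
  obtain root where R: "smult (lead_coeff gc) (\<Prod>i<degree gc. [:-root i, 1:]) = gc"
    by (rule complex_poly_decompose')
  have pg: "poly gc y = lead_coeff gc * (\<Prod>i<degree gc. y - root i)" for y
    by (subst R[symmetric]) (simp add: poly_prod)
  have isroot: "poly gc (root i) = 0" if "i < degree gc" for i
    using that by (auto simp: pg)
  have rr: "cmod (x - root i) > d" if "i < degree gc" for i
    using roots isroot[OF that] unfolding gc_def by blast
  have "d ^ degree gc < (\<Prod>i<degree gc. cmod (x - root i))"
  proof -
    have "(\<Prod>i<degree gc. d) < (\<Prod>i<degree gc. cmod (x - root i))"
    proof (rule prod_mono_strict[of 0])
      show "0 \<in> {..<degree gc}" using deg dg by simp
      show "d < cmod (x - root 0)" using deg dg by (intro rr) simp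
      show "0 \<le> d \<and> d \<le> cmod (x - root i)" if "i \<in> {..<degree gc}" for i
        using rr[of i] that d by simp
      show "0 < cmod (x - root i)" if "i \<in> {..<degree gc}" for i
      proof -
        have "d < cmod (x - root i)" using rr[of i] that by simp
        thus ?thesis using d by linarith
      qed
    qed simp
    thus ?thesis by simp
  qed
  moreover have "d \<le> d ^ degree gc" using d deg dg
    by (metis One_nat_def power_increasing power_one_right)
  ultimately have "d < (\<Prod>i<degree gc. cmod (x - root i))" by simp
  also have "\<dots> \<le> cmod (lead_coeff gc) * (\<Prod>i<degree gc. cmod (x - root i))"
  proof -
    have "1 \<le> cmod (lead_coeff gc)" using lg by (simp add: lc)
    moreover have "0 \<le> (\<Prod>i<degree gc. cmod (x - root i))" by (simp add: prod_nonneg)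
    ultimately show ?thesis using mult_right_mono by fastforce
  qed
  also have "\<dots> = cmod (poly gc x)"
    by (simp add: pg norm_mult prod_norm)
  finally show ?thesis by (simp add: gc_def)
qed

theorem corollary6:
  fixes f :: "int poly" and \<alpha> \<beta> :: real and j n d :: nat
  assumes primitive: "content f = 1"
    and pos: "0 < \<alpha>" "\<alpha> < \<beta>"
    and j: "j \<le> degree f"
    and dom: "\<bar>real_of_int (coeff f j)\<bar> * \<alpha> ^ j >
              (\<beta> / \<alpha>) ^ (degree f - j) *
              (\<Sum>i\<in>{0..degree f} - {j}. \<bar>real_of_int (coeff f i)\<bar> * \<alpha> ^ i)"
    and nd_pos: "n > 0" "d > 0"
    and range: "\<beta> - real d \<ge> real n" "real n \<ge> \<alpha> + real d"
    and dvd: "int d dvd \<bar>poly f (int n)\<bar>"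
    and val: "prime (\<bar>poly f (int n)\<bar> div int d) \<or>
              (\<exists>p k. prime (p::int) \<and> k \<ge> 1 \<and> \<bar>poly f (int n)\<bar> div int d = p ^ k \<and>
                      coprime (\<bar>poly f (int n)\<bar> div int d) \<bar>poly (pderiv f) (int n)\<bar>)"
  shows "irreducible f"
proof -
  define F where "F = (map_poly of_int f :: complex poly)"
  have normn: "cmod (of_nat n :: complex) = real n" by simp
  have rootsF: "cmod (of_nat n - z) > real d" if "poly F z = 0" for z
  proof -
    have "cmod z < \<alpha> \<or> cmod z > \<beta>"
      using roots_outside[OF pos j dom] that unfolding F_def by blast
    moreover have "cmod (of_nat n :: complex) - cmod z \<le> cmod (of_nat n - z)"
      by (rule norm_triangle_ineq2)
    moreover have "cmod z - cmod (of_nat n :: complex) \<le> cmod (of_nat n - z)"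
      by (metis norm_minus_commute norm_triangle_ineq2)
    ultimately show ?thesis using range normn by linarith
  qed
  have big: "\<bar>poly g (int n)\<bar> > int d" if dg: "degree g \<ge> 1" and gh: "f = g * h" for g h
  proof -
    have FF: "F = map_poly of_int g * map_poly of_int h"
      unfolding F_def gh by (rule map_poly_of_int_mult)
    have "real d < cmod (poly (map_poly of_int g) (of_nat n :: complex))"
    proof (rule factor_big[OF dg])
      show "1 \<le> real d" using nd_pos by simp
      fix z assume "poly (map_poly of_int g) z = (0::complex)"
      hence "poly F z = 0" by (simp add: FF)
      thus "real d < cmod (of_nat n - z)" by (rule rootsF)
    qed
    also have "poly (map_poly of_int g) (of_nat n :: complex) = of_int (poly g (int n))"
      using poly_map_of_int[of g "int n"] by simp
    finally have "real d < \<bar>real_of_int (poly g (int n))\<bar>" by (simp only: norm_of_int)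
    thus ?thesis by linarith
  qed
  define q where "q = \<bar>poly f (int n)\<bar> div int d"
  have qd: "q * int d = \<bar>poly f (int n)\<bar>" using dvd unfolding q_def by simp
  have qgt: "q > 1"
    using val unfolding q_def[symmetric]
  proof
    assume "prime q" thus ?thesis by (rule prime_gt_1_int)
  next
    assume "\<exists>p k. prime (p::int) \<and> k \<ge> 1 \<and> q = p ^ k \<and> coprime q \<bar>poly (pderiv f) (int n)\<bar>"
    then obtain p k where "prime (p::int)" "k \<ge> 1" "q = p ^ k" by blast
    moreover have "1 < p" using \<open>prime p\<close> by (rule prime_gt_1_int)
    ultimately show ?thesis using one_less_power[of p k] by simp
  qed
  show ?thesis
  proof (rule irreducibleI)
    show "f \<noteq> 0" using primitive by auto
    show "\<not> f dvd 1"
    proof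
      assume "f dvd 1"
      then obtain c where c: "f = [:c:]" "c dvd 1" by (auto simp: is_unit_poly_iff)
      hence "\<bar>poly f (int n)\<bar> = 1" by simp
      hence "q \<le> 1" unfolding q_def using nd_pos by (cases "d = 1") (auto simp: div_pos_pos_trivial)
      with qgt show False by simp
    qed
    fix g h assume gh: "f = g * h"
    show "g dvd 1 \<or> h dvd 1"
    proof (rule ccontr)
      assume nu: "\<not> (g dvd 1 \<or> h dvd 1)"
      have cn: "0 \<le> content p" for p :: "int poly"
      proof -
        have "normalize (content p) = content p" by (rule normalize_content)
        hence "\<bar>content p\<bar> = content p" by (simp only: normalize_int_def)
        thus ?thesis by (metis abs_ge_zero)
      qed
      have cc: "content g * content h = 1" using primitive by (simp add: gh content_mult)
      have cg: "content g = 1" and ch: "content h = 1"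
        using cc cn[of g] cn[of h] pos_zmult_eq_1_iff
        by (smt (verit) mult_nonneg_nonneg zero_less_mult_iff)+
      have degpos: "degree p \<ge> 1" if "content p = 1" "\<not> p dvd 1" for p :: "int poly"
      proof (rule ccontr)
        assume "\<not> degree p \<ge> 1"
        hence "degree p = 0" by simp
        then obtain c where "p = [:c:]" by (metis degree_eq_zeroE)
        with that show False by (auto simp: is_unit_poly_iff)
      qed
      have G: "\<bar>poly g (int n)\<bar> > int d" using big[OF degpos[OF cg] gh] nu by blast
      have H: "\<bar>poly h (int n)\<bar> > int d" using big[OF degpos[OF ch], of g] gh nu by (simp add: mult.commute)
      define GG where "GG = \<bar>poly g (int n)\<bar>"
      define HH where "HH = \<bar>poly h (int n)\<bar>"
      have qGH: "q * int d = GG * HH" using qd by (simp add: gh GG_def HH_def abs_mult)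
      have key: "q dvd GG \<or> q dvd HH"
        using val unfolding q_def[symmetric]
      proof
        assume "prime q"
        moreover have "q dvd GG * HH" using qGH by (metis dvd_triv_left)
        ultimately show ?thesis by (simp add: prime_dvd_mult_iff)
      next
        assume "\<exists>p k. prime (p::int) \<and> k \<ge> 1 \<and> q = p ^ k \<and> coprime q \<bar>poly (pderiv f) (int n)\<bar>"
        then obtain p k where p: "prime (p::int)" "k \<ge> 1" "q = p ^ k"
          and cop: "coprime q \<bar>poly (pderiv f) (int n)\<bar>" by blast
        have pq: "p dvd q" using p by (simp add: dvd_power)
        have np: "\<not> (p dvd GG \<and> p dvd HH)"
        proof
          assume "p dvd GG \<and> p dvd HH"
          hence "p dvd poly g (int n)" "p dvd poly h (int n)" by (auto simp: GG_def HH_def)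
          hence "p dvd poly (pderiv f) (int n)" by (simp add: gh pderiv_mult)
          hence "p dvd \<bar>poly (pderiv f) (int n)\<bar>" by simp
          with cop pq have "is_unit p" by (blast intro: coprime_common_divisor)
          with p show False using prime_gt_1_int[of p] by simp
        qed
        have "q dvd GG * HH" using qGH by (metis dvd_triv_left)
        from np have "\<not> p dvd HH \<or> \<not> p dvd GG" by blast
        thus ?thesis
        proof
          assume "\<not> p dvd HH"
          hence "coprime q HH" using p by (simp add: prime_imp_coprime)
          thus ?thesis using \<open>q dvd GG * HH\<close> by (simp add: coprime_dvd_mult_left_iff)
        next
          assume "\<not> p dvd GG"
          hence "coprime q GG" using p by (simp add: prime_imp_coprime)
          thus ?thesis using \<open>q dvd GG * HH\<close> by (simp add: coprime_dvd_mult_right_iff)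
        qed
      qed
      have fin: False if tt: "q * int d = A * B" "q dvd A" "A > int d" "B > int d" for A B
      proof -
        obtain u where u: "A = q * u" using tt(2) by blast
        have "q * int d = q * (u * B)" using tt(1) u by simp
        hence dd: "int d = u * B" using qgt by simp
        have "u > 0" using u tt(3) qgt nd_pos by (smt (verit) mult_le_0_iff of_nat_0_less_iff)
        hence "u * B \<ge> B" using tt(4) nd_pos by simp
        with dd tt(4) show False by simp
      qed
      from key show False
      proof
        assume "q dvd GG" thus False using fin[OF qGH] G H by (simp add: GG_def HH_def)
      next
        assume "q dvd HH" thus False using fin[of HH GG] qGH G H by (simp add: GG_def HH_def mult.commute)
      qed
    qed
  qed
qed

end
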